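(* Let $r\ge 2$, let $H$ be a digraph (possibly with loops), and let $D$ be an $H$-colored $r$-transitive digraph. For every $k \geq r$, $D$ has a $(k,H)$-kernel.
   Context: All digraphs are finite. A digraph $D$ is $r$-transitive if for all distinct $u,v\in V(D)$, whenever there is a directed $uv$-path of length $r$, the arc $(u,v)$ belongs to $A(D)$. $D$ has no loops and comes with a map $\rho: A(D)\to V(H)$. For a walk $W=(x_0,\ldots,x_n)$ in $D$, there is an obstruction on $x_i$ if $(\rho(x_{i-1},x_i),\rho(x_i,x_{i+1})) \notin A(H)$; for an open walk this is considered at internal vertices $x_i$, $1\le i\le n-1$, for a closed walk at all $i\in\{0,\ldots,n-1\}$ with indices modulo $n$. $O_H(W)$ is the set of indices with an obstruction; the $H$-length is $l_H(W)=|O_H(W)|+1$ for open $W$ and $|O_H(W)|$ for closed $W$. A $(k,H)$-kernel ($k\ge2$) is a set $S\subseteq V(D)$ such that for every two distinct $u,v\in S$ every directed $uv$-path in $D$ has $H$-length at least $k$, and for every $x\in V(D)\setminus S$ there is a directed path from $x$ to a vertex of $S$ of $H$-length at most $k-1$. *)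

theory Defs
  imports Main
begin

definition digraph :: "'a set \<Rightarrow> ('a \<times> 'a) set \<Rightarrow> bool" where
  "digraph V A \<longleftrightarrow> finite V \<and> A \<subseteq> V \<times> V"

definition loopless :: "('a \<times> 'a) set \<Rightarrow> bool" where
  "loopless A \<longleftrightarrow> (\<forall>x. (x, x) \<notin> A)"

text \<open>A directed walk (x_0,...,x_n) is represented by the nonempty list [x_0,...,x_n];
  its length is n.\<close>
definition is_walk :: "('a \<times> 'a) set \<Rightarrow> 'a list \<Rightarrow> bool" where
  "is_walk A W \<longleftrightarrow> W \<noteq> [] \<and> (\<forall>i < length W - 1. (W ! i, W ! Suc i) \<in> A)"

definition is_path :: "('a \<times> 'a) set \<Rightarrow> 'a list \<Rightarrow> bool" where
  "is_path A W \<longleftrightarrow> is_walk A W \<and> distinct W"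

definition uv_path :: "('a \<times> 'a) set \<Rightarrow> 'a \<Rightarrow> 'a \<Rightarrow> 'a list \<Rightarrow> bool" where
  "uv_path A u v W \<longleftrightarrow> is_path A W \<and> hd W = u \<and> last W = v"

definition r_transitive :: "('a \<times> 'a) set \<Rightarrow> nat \<Rightarrow> bool" where
  "r_transitive A r \<longleftrightarrow>
     (\<forall>u v W. u \<noteq> v \<and> uv_path A u v W \<and> length W - 1 = r \<longrightarrow> (u, v) \<in> A)"

definition H_colored :: "'a set \<Rightarrow> ('a \<times> 'a) set \<Rightarrow> 'c set \<Rightarrow> ('c \<times> 'c) set
    \<Rightarrow> ('a \<times> 'a \<Rightarrow> 'c) \<Rightarrow> bool" where
  "H_colored V A VH AH \<rho> \<longleftrightarrow> digraph V A \<and> loopless A \<and> digraph VH AH \<and> (\<forall>a\<in>A. \<rho> a \<in> VH)"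

definition obstructions_open :: "('c \<times> 'c) set \<Rightarrow> ('a \<times> 'a \<Rightarrow> 'c) \<Rightarrow> 'a list \<Rightarrow> nat set" where
  "obstructions_open AH \<rho> W =
     {i. 1 \<le> i \<and> i < length W - 1 \<and>
         (\<rho> (W ! (i - 1), W ! i), \<rho> (W ! i, W ! Suc i)) \<notin> AH}"

definition H_length_open :: "('c \<times> 'c) set \<Rightarrow> ('a \<times> 'a \<Rightarrow> 'c) \<Rightarrow> 'a list \<Rightarrow> nat" where
  "H_length_open AH \<rho> W = card (obstructions_open AH \<rho> W) + 1"

definition kH_kernel :: "'a set \<Rightarrow> ('a \<times> 'a) set \<Rightarrow> ('c \<times> 'c) set \<Rightarrow> ('a \<times> 'a \<Rightarrow> 'c)
    \<Rightarrow> nat \<Rightarrow> 'a set \<Rightarrow> bool" where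
  "kH_kernel V A AH \<rho> k S \<longleftrightarrow>
     S \<subseteq> V \<and>
     (\<forall>u\<in>S. \<forall>v\<in>S. u \<noteq> v \<longrightarrow> (\<forall>W. uv_path A u v W \<longrightarrow> H_length_open AH \<rho> W \<ge> k)) \<and>
     (\<forall>x\<in>V - S. \<exists>s\<in>S. \<exists>W. uv_path A x s W \<and> H_length_open AH \<rho> W \<le> k - 1)"

end

theory Submission
  imports Defs
begin

lemma walk_rtrancl_nth:
  assumes "is_walk A W" "i < length W"
  shows "(hd W, W ! i) \<in> A\<^sup>*"
  using assms
proof (induction i)
  case 0
  then show ?case by (simp add: hd_conv_nth is_walk_def)
next
  case (Suc i)
  then have "(W ! i, W ! Suc i) \<in> A" by (auto simp: is_walk_def)
  with Suc show ?case by (meson Suc_lessD rtrancl.rtrancl_into_rtrancl)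
qed

lemma walk_rtrancl:
  assumes "is_walk A W"
  shows "(hd W, last W) \<in> A\<^sup>*"
proof -
  have "W \<noteq> []" using assms by (simp add: is_walk_def)
  then show ?thesis using walk_rtrancl_nth[OF assms, of "length W - 1"]
    by (simp add: last_conv_nth)
qed

lemma rtrancl_walk:
  assumes "(x, y) \<in> A\<^sup>*"
  shows "\<exists>W. is_walk A W \<and> hd W = x \<and> last W = y"
  using assms
proof (induction rule: rtrancl_induct)
  case base
  then show ?case by (rule exI[of _ "[x]"]) (simp add: is_walk_def)
next
  case (step y z)
  then obtain W where W: "is_walk A W" "hd W = x" "last W = y" by blast
  have ne: "W \<noteq> []" using W by (simp add: is_walk_def)
  have "is_walk A (W @ [z])"
    unfolding is_walk_def
  proof (intro conjI allI impI)
    fix i assume i: "i < length (W @ [z]) - 1"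
    show "((W @ [z]) ! i, (W @ [z]) ! Suc i) \<in> A"
    proof (cases "i < length W - 1")
      case True
      then show ?thesis using W(1) by (auto simp: nth_append is_walk_def)
    next
      case False
      then have "i = length W - 1" using i by simp
      then show ?thesis using ne W step by (auto simp: nth_append last_conv_nth)
    qed
  qed simp
  then show ?case using W ne by (intro exI[of _ "W @ [z]"]) simp
qed

lemma shortcut_eq:
  assumes "is_walk A W" "i < j" "j < length W" "W ! i = W ! j"
  shows "is_walk A (take i W @ drop j W) \<and> hd (take i W @ drop j W) = hd W
    \<and> last (take i W @ drop j W) = last W \<and> length (take i W @ drop j W) < length W"
proof -
  let ?W = "take i W @ drop j W"
  have len: "length ?W = i + length W - j" using assms by simp
  have nth: "?W ! m = (if m < i then W ! m else W ! (m - i + j))" if "m < length ?W" for m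
    using assms that by (auto simp: nth_append add.commute)
  have w: "is_walk A ?W"
    unfolding is_walk_def
  proof (intro conjI allI impI)
    show "?W \<noteq> []" using assms by simp
    fix m assume m: "m < length ?W - 1"
    have e: "\<And>p. p < length W - 1 \<Longrightarrow> (W ! p, W ! Suc p) \<in> A" using assms(1) by (simp add: is_walk_def)
    consider "Suc m < i" | "Suc m = i" | "m \<ge> i" by linarith
    then show "(?W ! m, ?W ! Suc m) \<in> A"
    proof cases
      case 1 then show ?thesis using m nth e assms by auto
    next
      case 2 then show ?thesis using m nth[of m] nth[of "Suc m"] e[of m] assms by auto
    next
      case 3
      have eq: "Suc m - i + j = Suc (m - i + j)" using 3 by simp
      have "m - i + j < length W - 1" using m 3 assms by simp
      then have "(W ! (m - i + j), W ! Suc (m - i + j)) \<in> A" using e by blast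
      then show ?thesis using m 3 nth[of m] nth[of "Suc m"] eq by simp
    qed
  qed
  have "hd ?W = hd W"
  proof -
    have ne: "W \<noteq> []" using assms by auto
    show ?thesis using assms nth[of 0] ne hd_conv_nth[OF ne] by (cases "i = 0") (auto simp: hd_drop_conv_nth)
  qed
  moreover have "last ?W = last W" using assms by simp
  ultimately show ?thesis using w len assms by simp
qed

lemma shortcut_arc:
  assumes "is_walk A W" "i < j" "j < length W" "(W ! i, W ! j) \<in> A"
  shows "is_walk A (take (Suc i) W @ drop j W) \<and> hd (take (Suc i) W @ drop j W) = hd W
    \<and> last (take (Suc i) W @ drop j W) = last W
    \<and> length (take (Suc i) W @ drop j W) = Suc i + length W - j"
proof -
  let ?W = "take (Suc i) W @ drop j W"
  have len: "length ?W = Suc i + length W - j" using assms by simp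
  have nth: "?W ! m = (if m \<le> i then W ! m else W ! (m - Suc i + j))" if "m < length ?W" for m
    using assms that by (auto simp: nth_append add.commute)
  have w: "is_walk A ?W"
    unfolding is_walk_def
  proof (intro conjI allI impI)
    show "?W \<noteq> []" using assms by simp
    fix m assume m: "m < length ?W - 1"
    have e: "\<And>p. p < length W - 1 \<Longrightarrow> (W ! p, W ! Suc p) \<in> A" using assms(1) by (simp add: is_walk_def)
    consider "m < i" | "m = i" | "m > i" by linarith
    then show "(?W ! m, ?W ! Suc m) \<in> A"
    proof cases
      case 1 then show ?thesis using m nth[of m] nth[of "Suc m"] e[of m] assms by auto
    next
      case 2 then show ?thesis using m nth[of m] nth[of "Suc m"] assms by auto
    next
      case 3
      have eq: "Suc m - Suc i + j = Suc (m - Suc i + j)" using 3 by simp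
      have "m - Suc i + j < length W - 1" using m 3 assms by simp
      then have "(W ! (m - Suc i + j), W ! Suc (m - Suc i + j)) \<in> A" using e by blast
      then show ?thesis using m 3 nth[of m] nth[of "Suc m"] eq by simp
    qed
  qed
  have "hd ?W = hd W"
    using assms by (simp add: hd_append)
  moreover have "last ?W = last W" using assms by simp
  ultimately show ?thesis using w len assms by simp
qed

lemma short_path:
  assumes "(x, y) \<in> A\<^sup>*" "x \<noteq> y" "r_transitive A r" "r \<ge> 2"
  shows "\<exists>W. uv_path A x y W \<and> 2 \<le> length W \<and> length W \<le> r"
proof -
  let ?P = "\<lambda>n. \<exists>W. is_walk A W \<and> hd W = x \<and> last W = y \<and> length W = n"
  have ex: "\<exists>n. ?P n" using rtrancl_walk[OF assms(1)] by blast
  let ?n = "LEAST n. ?P n"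
  obtain W where W: "is_walk A W" "hd W = x" "last W = y" "length W = ?n"
    using LeastI_ex[OF ex] by blast
  have min: "\<And>W'. is_walk A W' \<Longrightarrow> hd W' = x \<Longrightarrow> last W' = y \<Longrightarrow> length W \<le> length W'"
    using W(4) by (metis (mono_tags, lifting) Least_le)
  have ne: "W \<noteq> []" using W by (simp add: is_walk_def)
  have dist: "distinct W"
  proof (rule ccontr)
    assume "\<not> distinct W"
    then obtain i j where ij: "i < j" "j < length W" "W ! i = W ! j"
      by (metis distinct_conv_nth linorder_neqE_nat)
    from shortcut_eq[OF W(1) ij] W min show False by (metis not_le)
  qed
  have l2: "2 \<le> length W"
  proof (rule ccontr)
    assume "\<not> 2 \<le> length W"
    moreover have "length W \<noteq> 0" using ne by simp
    ultimately have "length W = 1" by linarith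
    then show False using W assms(2) by (cases W) auto
  qed
  have lr: "length W \<le> r"
  proof (rule ccontr)
    assume "\<not> length W \<le> r"
    then have lr: "r < length W" by simp
    let ?T = "take (Suc r) W"
    have tw: "is_walk A ?T" using W(1) lr unfolding is_walk_def by auto
    have lt: "last ?T = W ! r" using lr by (simp add: take_Suc_conv_app_nth)
    have tp: "uv_path A (W ! 0) (W ! r) ?T"
      using tw dist lr ne lt unfolding uv_path_def is_path_def
      by (auto simp: hd_conv_nth last_conv_nth min_def)
    have "W ! 0 \<noteq> W ! r" using dist lr assms(4) nth_eq_iff_index_eq[OF dist, of 0 r] ne by simp
    then have "(W ! 0, W ! r) \<in> A"
    proof -
      have "length ?T - 1 = r" using lr by simp
      then show ?thesis using assms(3) tp \<open>W ! 0 \<noteq> W ! r\<close> unfolding r_transitive_def by blast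
    qed
    have "0 < r" using assms(4) by simp
    from shortcut_arc[OF W(1) this lr \<open>(W ! 0, W ! r) \<in> A\<close>]
    have sc: "is_walk A (take (Suc 0) W @ drop r W)" "hd (take (Suc 0) W @ drop r W) = x"
      "last (take (Suc 0) W @ drop r W) = y" "length (take (Suc 0) W @ drop r W) = Suc 0 + length W - r"
      using W by auto
    have "length W \<le> Suc 0 + length W - r" using min[OF sc(1-3)] sc(4) by simp
    then show False using assms(4) lr by simp
  qed
  show ?thesis using W dist l2 lr unfolding uv_path_def is_path_def by auto
qed

lemma H_length_bound:
  assumes "2 \<le> length W"
  shows "H_length_open AH \<rho> W \<le> length W - 1"
proof -
  have "obstructions_open AH \<rho> W \<subseteq> {1..<length W - 1}"
    unfolding obstructions_open_def by auto
  then have "card (obstructions_open AH \<rho> W) \<le> length W - 2"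
    by (metis card_atLeastLessThan card_mono diff_diff_left finite_atLeastLessThan one_add_one)
  then show ?thesis unfolding H_length_open_def using assms by simp
qed

lemma trminal_exists:
  assumes "finite V" "A \<subseteq> V \<times> V"
  shows "\<exists>y. (\<forall>z. (y, z) \<in> A\<^sup>* \<longrightarrow> (z, y) \<in> A\<^sup>*) \<and> (x, y) \<in> A\<^sup>*"
proof (induction "card (A\<^sup>* `` {x})" arbitrary: x rule: less_induct)
  case less
  have fin: "\<And>u. finite (A\<^sup>* `` {u})"
  proof -
    fix u
    have "A\<^sup>* `` {u} \<subseteq> insert u V"
    proof
      fix z assume "z \<in> A\<^sup>* `` {u}"
      then have "(u, z) \<in> A\<^sup>*" by simp
      then show "z \<in> insert u V"
        by (induction rule: rtrancl_induct) (use assms in auto)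
    qed
    then show "finite (A\<^sup>* `` {u})" using assms(1) finite_subset by blast
  qed
  show ?case
  proof (cases "\<forall>z. (x, z) \<in> A\<^sup>* \<longrightarrow> (z, x) \<in> A\<^sup>*")
    case True then show ?thesis by blast
  next
    case False
    then obtain y where y: "(x, y) \<in> A\<^sup>*" "(y, x) \<notin> A\<^sup>*" by blast
    have "A\<^sup>* `` {y} \<subset> A\<^sup>* `` {x}"
      using y by (auto intro: rtrancl_trans)
    then have "card (A\<^sup>* `` {y}) < card (A\<^sup>* `` {x})"
      using fin psubset_card_mono by blast
    from less[OF this] y show ?thesis by (meson rtrancl_trans)
  qed
qed

theorem corollary12:
  fixes V :: "'a set" and A :: "('a \<times> 'a) set"
    and VH :: "'c set" and AH :: "('c \<times> 'c) set"
    and \<rho> :: "'a \<times> 'a \<Rightarrow> 'c" and r k :: nat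
  assumes "r \<ge> 2"
    and "H_colored V A VH AH \<rho>"
    and "r_transitive A r"
    and "k \<ge> r"
  shows "\<exists>S. kH_kernel V A AH \<rho> k S"
proof -
  have finV: "finite V" and AV: "A \<subseteq> V \<times> V"
    using assms(2) by (auto simp: H_colored_def digraph_def)
  define trm where "trm = (\<lambda>x. \<forall>z. (x, z) \<in> A\<^sup>* \<longrightarrow> (z, x) \<in> A\<^sup>*)"
  define rep where "rep = (\<lambda>x. SOME y. (x, y) \<in> A\<^sup>* \<and> (y, x) \<in> A\<^sup>*)"
  define S where "S = {x \<in> V. trm x \<and> rep x = x}"
  have rep_spec: "(x, rep x) \<in> A\<^sup>* \<and> (rep x, x) \<in> A\<^sup>*" for x
    unfolding rep_def by (rule someI[of _ x]) simp
  have rep_cong: "rep x = rep y" if "(x, y) \<in> A\<^sup>*" "(y, x) \<in> A\<^sup>*" for x y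
  proof -
    have "(\<lambda>z. (x, z) \<in> A\<^sup>* \<and> (z, x) \<in> A\<^sup>*) = (\<lambda>z. (y, z) \<in> A\<^sup>* \<and> (z, y) \<in> A\<^sup>*)"
      using that by (auto intro: rtrancl_trans)
    then show ?thesis unfolding rep_def by simp
  qed
  have inV: "z \<in> V" if "(u, z) \<in> A\<^sup>*" "u \<in> V" for u z
    using that by (induction rule: rtrancl_induct) (use AV in auto)
  have indep: "\<forall>u\<in>S. \<forall>v\<in>S. u \<noteq> v \<longrightarrow> (\<forall>W. uv_path A u v W \<longrightarrow> H_length_open AH \<rho> W \<ge> k)"
  proof (intro ballI impI allI)
    fix u v W assume u: "u \<in> S" and v: "v \<in> S" and uv: "u \<noteq> v" and W: "uv_path A u v W"
    have "(u, v) \<in> A\<^sup>*" using W walk_rtrancl unfolding uv_path_def is_path_def by blast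
    moreover then have "(v, u) \<in> A\<^sup>*" using u unfolding S_def trm_def by auto
    ultimately have "rep u = rep v" by (rule rep_cong)
    then have False using u v uv unfolding S_def by auto
    then show "H_length_open AH \<rho> W \<ge> k" ..
  qed
  have absorb: "\<forall>x\<in>V - S. \<exists>s\<in>S. \<exists>W. uv_path A x s W \<and> H_length_open AH \<rho> W \<le> k - 1"
  proof
    fix x assume x: "x \<in> V - S"
    obtain y where y: "trm y" "(x, y) \<in> A\<^sup>*"
      using trminal_exists[OF finV AV, of x] unfolding trm_def by blast
    let ?s = "rep y"
    have ys: "(y, ?s) \<in> A\<^sup>*" "(?s, y) \<in> A\<^sup>*" using rep_spec by auto
    have ts: "trm ?s" using y(1) ys unfolding trm_def by (meson rtrancl_trans)
    have rs: "rep ?s = ?s" using rep_cong[OF ys] by simp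
    have xs: "(x, ?s) \<in> A\<^sup>*" using y ys by (meson rtrancl_trans)
    have sV: "?s \<in> V" using inV xs x by blast
    have sS: "?s \<in> S" using ts rs sV unfolding S_def by simp
    have neq: "x \<noteq> ?s" using x sS by blast
    obtain W where W: "uv_path A x ?s W" "2 \<le> length W" "length W \<le> r"
      using short_path[OF xs neq assms(3,1)] by blast
    have "H_length_open AH \<rho> W \<le> k - 1"
      using H_length_bound[OF W(2), of AH \<rho>] W(3) assms(4) by simp
    then show "\<exists>s\<in>S. \<exists>W. uv_path A x s W \<and> H_length_open AH \<rho> W \<le> k - 1"
      using sS W(1) by blast
  qed
  have "S \<subseteq> V" unfolding S_def by blast
  then show ?thesis unfolding kH_kernel_def using indep absorb by blast
qed

end
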